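(* Consider a $K$-armed stochastic bandit ($K\ge2$) whose arm distributions $\nu_a$ are arbitrary probability distributions on $[0,1]$. Let $f(t)=\log(t)+3\log(\log(t))$ for $t\ge3$ and $f(1)=f(2)=f(3)$, and run the following \texttt{UCB} algorithm: pull each arm once in rounds $1,\dots,K$; then at each step $t+1>K$ (for $t=K,\dots,T-1$) pull an arm maximizing $\hat\mu_a(t)+\sqrt{f(t)/(2N_a(t))}$ (equivalently, the \texttt{kl-UCB} algorithm with divergence $d_{\mathrm{qua}}(\mu,\mu')=2(\mu-\mu')^2$ and this $f$). Then for every suboptimal arm $a$ (i.e. $\mu_a<\mu^\star$) and every horizon $T\ge3$, \[ \mathbb{E}[N_a(T)]\le\frac{\log(T)}{2(\mu^\star-\mu_a)^2}+\frac{2\sqrt{\pi}}{(\mu^\star-\mu_a)^2}\sqrt{\log(T)+3\log(\log(T))}+\Big(4e+\frac{3}{2(\mu^\star-\mu_a)^2}\Big)\log(\log(T))+\frac{8}{(\mu^\star-\mu_a)^2}+6. \]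
   Context: Bandit protocol: at each round $t\ge1$ the player picks an arm $A_t$ based on past information and receives a reward $Y_t$ drawn independently from $\nu_{A_t}$. $\mu_a$ is the mean of $\nu_a$, $\mu^\star=\max_a\mu_a$, $N_a(t)=\sum_{s=1}^t\mathbf{1}\{A_s=a\}$, and $\hat\mu_a(t)=\frac{1}{N_a(t)}\sum_{s=1}^tY_s\mathbf{1}\{A_s=a\}$. *)

theory Defs
  imports "HOL-Probability.Probability"
begin

text \<open>A history is the list of (arm pulled, reward received) for rounds 1..t.\<close>
type_synonym history = "(nat \<times> real) list"

text \<open>Reward-table model: omega (a, n) is the reward of the (n+1)-th pull of arm a.
  The policy maps the current history to the next arm.\<close>
fun run :: "(history \<Rightarrow> nat) \<Rightarrow> (nat \<times> nat \<Rightarrow> real) \<Rightarrow> nat \<Rightarrow> history" where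
  "run \<pi> \<omega> 0 = []"
| "run \<pi> \<omega> (Suc t) =
     (let h = run \<pi> \<omega> t; a = \<pi> h
      in h @ [(a, \<omega> (a, length (filter (\<lambda>p. fst p = a) h)))])"

definition num_pulls :: "history \<Rightarrow> nat \<Rightarrow> nat" where
  "num_pulls h a = length (filter (\<lambda>p. fst p = a) h)"

definition emp_mean :: "history \<Rightarrow> nat \<Rightarrow> real" where
  "emp_mean h a = (\<Sum>p\<leftarrow>filter (\<lambda>p. fst p = a) h. snd p) / real (num_pulls h a)"

definition ucb_f :: "nat \<Rightarrow> real" where
  "ucb_f t = ln (real (max t 3)) + 3 * ln (ln (real (max t 3)))"

definition ucb_index :: "history \<Rightarrow> nat \<Rightarrow> real" where
  "ucb_index h a = emp_mean h a + sqrt (ucb_f (length h) / (2 * real (num_pulls h a)))"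

text \<open>UCB with arbitrary (deterministic, history-dependent) tie-breaking:
  rounds 1..K pull arms 0..K-1; afterwards pull a maximiser of the index.\<close>
definition is_ucb_policy :: "nat \<Rightarrow> (history \<Rightarrow> nat) \<Rightarrow> bool" where
  "is_ucb_policy K \<pi> \<longleftrightarrow>
     (\<forall>h. (length h < K \<longrightarrow> \<pi> h = length h) \<and>
          (K \<le> length h \<longrightarrow> \<pi> h < K \<and> (\<forall>b<K. ucb_index h b \<le> ucb_index h (\<pi> h))))"

definition reward_space :: "nat \<Rightarrow> (nat \<Rightarrow> real measure) \<Rightarrow> (nat \<times> nat \<Rightarrow> real) measure" where
  "reward_space K \<nu> = (\<Pi>\<^sub>M i\<in>{0..<K} \<times> (UNIV :: nat set). \<nu> (fst i))"

definition arm_mean :: "(nat \<Rightarrow> real measure) \<Rightarrow> nat \<Rightarrow> real" where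
  "arm_mean \<nu> a = (\<integral>x. x \<partial>(\<nu> a))"

definition opt_mean :: "nat \<Rightarrow> (nat \<Rightarrow> real measure) \<Rightarrow> real" where
  "opt_mean K \<nu> = Max (arm_mean \<nu> ` {0..<K})"

end

theory Submission
  imports Defs "HOL-Analysis.Analysis"
begin


lemma (in prob_space) indep_sets_reindex:
  assumes ind: "indep_sets F I" and inj: "inj_on h J" and sub: "h ` J \<subseteq> I"
  shows "indep_sets (\<lambda>j. F (h j)) J"
  unfolding indep_sets_def
proof (intro conjI ballI allI impI)
  fix j assume "j \<in> J" then show "F (h j) \<subseteq> events"
    using ind sub by (auto simp: indep_sets_def)
next
  fix J' A assume J': "J' \<subseteq> J" "J' \<noteq> {}" "finite J'" and A: "A \<in> Pi J' (\<lambda>j. F (h j))"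
  define B where "B = (\<lambda>i. A (inv_into J' h i))"
  have injJ': "inj_on h J'" using inj J' inj_on_subset by blast
  have Binv: "B (h j) = A j" if "j \<in> J'" for j
    using that injJ' by (simp add: B_def)
  have "prob (\<Inter>i\<in>h ` J'. B i) = (\<Prod>i\<in>h ` J'. prob (B i))"
  proof -
    have "h ` J' \<subseteq> I" "h ` J' \<noteq> {}" "finite (h ` J')" using J' sub by auto
    moreover have "B \<in> Pi (h ` J') F" using A Binv by auto
    ultimately show ?thesis using ind unfolding indep_sets_def by blast
  qed
  moreover have "(\<Inter>i\<in>h ` J'. B i) = (\<Inter>j\<in>J'. A j)" using Binv by auto
  moreover have "(\<Prod>i\<in>h ` J'. prob (B i)) = (\<Prod>j\<in>J'. prob (A j))"
    by (subst prod.reindex[OF injJ']) (simp add: Binv)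
  ultimately show "prob (\<Inter>j\<in>J'. A j) = (\<Prod>j\<in>J'. prob (A j))" by simp
qed

lemma (in prob_space) indep_vars_reindex:
  assumes ind: "indep_vars M' X I" and inj: "inj_on h J" and sub: "h ` J \<subseteq> I"
  shows "indep_vars (\<lambda>j. M' (h j)) (\<lambda>j. X (h j)) J"
  using ind sub unfolding indep_vars_def2
  by (auto intro!: indep_sets_reindex[OF _ inj sub, where F="\<lambda>i. {X i -` A \<inter> space M |A. A \<in> sets (M' i)}"])

lemma (in prob_space) indep_var_nn_integral:
  fixes X1 X2 :: "'a \<Rightarrow> ennreal"
  assumes "indep_var borel X1 borel X2"
  shows "(\<integral>\<^sup>+\<omega>. X1 \<omega> * X2 \<omega> \<partial>M) = (\<integral>\<^sup>+\<omega>. X1 \<omega> \<partial>M) * (\<integral>\<^sup>+\<omega>. X2 \<omega> \<partial>M)"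
proof -
  have i: "indep_vars (\<lambda>_. borel) (case_bool X1 X2) UNIV"
  proof -
    have "(\<lambda>_::bool. borel::ennreal measure) = case_bool borel borel"
      by (simp add: fun_eq_iff split: bool.split)
    then show ?thesis using assms(1) unfolding indep_var_def by simp
  qed
  have "(\<integral>\<^sup>+\<omega>. (\<Prod>i\<in>UNIV. case_bool X1 X2 i \<omega>) \<partial>M) = (\<Prod>i\<in>UNIV. \<integral>\<^sup>+\<omega>. case_bool X1 X2 i \<omega> \<partial>M)"
    by (rule indep_vars_nn_integral) (use i in \<open>auto split: bool.split\<close>)
  then show ?thesis by (simp add: UNIV_bool mult.commute)
qed



lemma meas_psum:
  "j \<le> k \<Longrightarrow> (\<lambda>v. sum v {..<j}) \<in> borel_measurable (PiM {0..<k::nat} (\<lambda>_. borel :: real measure))"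
  by (rule borel_measurable_sum, rule measurable_component_singleton) auto

lemma meas_isum:
  "(\<lambda>v. sum v {k..<N}) \<in> borel_measurable (PiM {k..<N::nat} (\<lambda>_. borel :: real measure))"
  by (rule borel_measurable_sum, rule measurable_component_singleton) auto

lemma meas_g1:
  fixes x :: real and k :: nat
  shows "(\<lambda>v. indicator {v. x \<le> (\<Sum>i<k. v i) \<and> (\<forall>j\<in>{..<k}. (\<Sum>i<j. v i) < x)} v * exp (l * (\<Sum>i<k. v i)))
     \<in> borel_measurable (PiM {0..<k} (\<lambda>_. borel))"
proof -
  note [measurable] = meas_psum[of k k, simplified]
  have [measurable]: "j \<in> {..<k} \<Longrightarrow> (\<lambda>v. sum v {..<j}) \<in> borel_measurable (PiM {0..<k} (\<lambda>_. borel :: real measure))" for j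
    by (rule meas_psum) auto
  show ?thesis by measurable
qed

lemma meas_g2:
  fixes k N :: nat and l :: real
  shows "(\<lambda>v. exp (l * (\<Sum>i\<in>{k..<N}. v i)))
     \<in> borel_measurable (PiM {k..<N} (\<lambda>_. borel :: real measure))"
proof -
  note [measurable] = meas_isum[of k N]
  show ?thesis by measurable
qed

lemma (in prob_space) maximal_hoeffding:
  fixes Y :: "nat \<Rightarrow> 'a \<Rightarrow> real" and c :: "nat \<Rightarrow> real" and N :: nat and x :: real
  assumes indep: "indep_vars (\<lambda>_. borel) Y {0..<N}"
    and bnd: "\<And>i. i < N \<Longrightarrow> AE \<omega> in M. Y i \<omega> \<in> {c i..c i + 1}"
    and mean0: "\<And>i. i < N \<Longrightarrow> expectation (Y i) = 0"
    and x: "x > 0" and N: "N > 0"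
  shows "prob {\<omega>\<in>space M. \<exists>n\<le>N. x \<le> (\<Sum>i<n. Y i \<omega>)} \<le> exp (-2*x\<^sup>2/N)"
proof -
  define l where "l = 4 * x / N"
  have l: "l > 0" using x N by (simp add: l_def)
  have rv: "Y i \<in> borel_measurable M" if "i < N" for i
    using indep that by (auto simp: indep_vars_def)
  define Y' where "Y' i \<omega> = (if i < N then Y i \<omega> else 0)" for i \<omega>
  have [measurable]: "Y' i \<in> borel_measurable M" for i
  proof (cases "i < N")
    case True
    then have "Y' i = Y i" by (simp add: Y'_def fun_eq_iff)
    then show ?thesis using rv True by simp
  next
    case False
    then have "Y' i = (\<lambda>_. 0)" by (simp add: Y'_def fun_eq_iff)
    then show ?thesis by simp
  qed
  define S where "S n \<omega> = (\<Sum>i<n. Y' i \<omega>)" for n \<omega>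
  have [measurable]: "S n \<in> borel_measurable M" for n unfolding S_def by measurable
  have SY: "S n \<omega> = (\<Sum>i<n. Y i \<omega>)" if "n \<le> N" for n \<omega>
    using that unfolding S_def by (intro sum.cong) (auto simp: Y'_def)
  define E where "E k = {\<omega>\<in>space M. x \<le> S k \<omega> \<and> (\<forall>j<k. S j \<omega> < x)}" for k
  have Em[measurable]: "E k \<in> sets M" for k unfolding E_def by measurable
  have mgf_le: "(\<integral>\<^sup>+\<omega>. ennreal (exp (l * Y i \<omega>)) \<partial>M) \<le> ennreal (exp (l\<^sup>2 / 8))" if "i < N" for i
  proof -
    interpret interval_bounded_random_variable M "Y i" "c i" "c i + 1"
      by unfold_locales (use that rv bnd in auto)
    from Hoeffdings_lemma_nn_integral_0[OF l mean0[OF that]] show ?thesis by simp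
  qed
  have mgf_ge: "1 \<le> (\<integral>\<^sup>+\<omega>. ennreal (exp (l * Y i \<omega>)) \<partial>M)" if "i < N" for i
  proof -
    interpret Yi: interval_bounded_random_variable M "Y i" "c i" "c i + 1"
      by unfold_locales (use that rv bnd in auto)
    interpret B: interval_bounded_random_variable M "\<lambda>\<omega>. exp (l * Y i \<omega>)" "exp (l * c i)" "exp (l * (c i + 1))"
    proof unfold_locales
      show "random_variable borel (\<lambda>\<omega>. exp (l * Y i \<omega>))" using rv[OF that] by measurable
      show "AE \<omega> in M. exp (l * Y i \<omega>) \<in> {exp (l * c i)..exp (l * (c i + 1))}"
        using bnd[OF that] by eventually_elim (use l in auto)
    qed
    have "(\<integral>\<^sup>+\<omega>. ennreal (exp (l * Y i \<omega>)) \<partial>M) = ennreal (expectation (\<lambda>\<omega>. exp (l * Y i \<omega>)))"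
      by (rule nn_integral_eq_integral) auto
    moreover have "expectation (\<lambda>\<omega>. 1 + l * Y i \<omega>) \<le> expectation (\<lambda>\<omega>. exp (l * Y i \<omega>))"
    proof (rule integral_mono)
      show "integrable M (\<lambda>\<omega>. 1 + l * Y i \<omega>)"
        using Yi.integrable by simp
      show "integrable M (\<lambda>\<omega>. exp (l * Y i \<omega>))" by (rule B.integrable)
    qed simp
    moreover have "expectation (\<lambda>\<omega>. 1 + l * Y i \<omega>) = expectation (\<lambda>_. 1) + expectation (\<lambda>\<omega>. l * Y i \<omega>)"
      by (rule Bochner_Integration.integral_add) (use Yi.integrable in auto)
    moreover have "expectation (\<lambda>\<omega>. l * Y i \<omega>) = 0" using mean0[OF that] by simp
    ultimately have "ennreal 1 \<le> ennreal (expectation (\<lambda>\<omega>. exp (l * Y i \<omega>)))"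
      using mean0[OF that] by (intro ennreal_leI) (simp add: prob_space)
    with \<open>(\<integral>\<^sup>+\<omega>. ennreal (exp (l * Y i \<omega>)) \<partial>M) = _\<close> show ?thesis by simp
  qed
  have total: "(\<integral>\<^sup>+\<omega>. ennreal (exp (l * S N \<omega>)) \<partial>M) \<le> ennreal (exp (N * l\<^sup>2 / 8))"
  proof -
    have "(\<integral>\<^sup>+\<omega>. ennreal (exp (l * S N \<omega>)) \<partial>M) = (\<integral>\<^sup>+\<omega>. (\<Prod>i\<in>{0..<N}. ennreal (exp (l * Y i \<omega>))) \<partial>M)"
      by (intro nn_integral_cong) (simp add: SY sum_distrib_left exp_sum prod_ennreal atLeast0LessThan)
    also have "\<dots> = (\<Prod>i\<in>{0..<N}. \<integral>\<^sup>+\<omega>. ennreal (exp (l * Y i \<omega>)) \<partial>M)"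
      by (intro indep_vars_nn_integral indep_vars_compose2[OF indep]) auto
    also have "\<dots> \<le> (\<Prod>i\<in>{0..<N}. ennreal (exp (l\<^sup>2/8)))"
      by (intro prod_mono_ennreal mgf_le) auto
    also have "\<dots> = ennreal (exp (N * (l\<^sup>2 / 8)))"
    proof -
      have "exp (l\<^sup>2 / 8) ^ N = exp (N * (l\<^sup>2 / 8))" by (rule exp_of_nat_mult[symmetric])
      then show ?thesis by (simp add: prod_ennreal ennreal_power)
    qed
    finally show ?thesis by simp
  qed
  have step: "ennreal (exp (l * x)) * emeasure M (E k) \<le> (\<integral>\<^sup>+\<omega>. indicator (E k) \<omega> * ennreal (exp (l * S N \<omega>)) \<partial>M)"
    if k: "k \<le> N" for k
  proof -
    define g1 where "g1 v = ennreal (indicator {v. x \<le> (\<Sum>i<k. v i) \<and> (\<forall>j\<in>{..<k}. (\<Sum>i<j. v i) < x)} v * exp (l * (\<Sum>i<k. v i)))" for v :: "nat \<Rightarrow> real"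
    define g2 where "g2 v = ennreal (exp (l * (\<Sum>i\<in>{k..<N}. v i)))" for v :: "nat \<Rightarrow> real"
    define R1 where "R1 \<omega> = restrict (\<lambda>i. Y i \<omega>) {0..<k}" for \<omega>
    define R2 where "R2 \<omega> = restrict (\<lambda>i. Y i \<omega>) {k..<N}" for \<omega>
    have mg1: "g1 \<in> borel_measurable (PiM {0..<k} (\<lambda>_. borel))"
    proof -
      note [measurable] = meas_g1[of x k l]
      show ?thesis unfolding g1_def by measurable
    qed
    have mg2: "g2 \<in> borel_measurable (PiM {k..<N} (\<lambda>_. borel))"
    proof -
      note [measurable] = meas_g2[of l k N]
      show ?thesis unfolding g2_def by measurable
    qed
    have ind: "indep_var borel (g1 \<circ> R1) borel (g2 \<circ> R2)"
      unfolding R1_def R2_def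
      by (rule indep_var_compose[OF indep_var_restrict[OF indep]])
         (use k mg1 mg2 in auto)
    have eq1: "g1 (R1 \<omega>) = indicator (E k) \<omega> * ennreal (exp (l * S k \<omega>))" if "\<omega> \<in> space M" for \<omega>
    proof -
      have a: "(\<Sum>i<j. R1 \<omega> i) = S j \<omega>" if "j \<le> k" for j
        using that k by (subst SY) (auto simp: R1_def intro!: sum.cong)
      show ?thesis using \<open>\<omega> \<in> space M\<close> k
        by (auto simp: g1_def a E_def indicator_def)
    qed
    have eq2: "g2 (R2 \<omega>) = ennreal (exp (l * (\<Sum>i\<in>{k..<N}. Y i \<omega>)))" for \<omega>
      by (auto simp: g2_def R2_def intro!: arg_cong[where f=ennreal] sum.cong)
    have split: "S N \<omega> = S k \<omega> + (\<Sum>i\<in>{k..<N}. Y i \<omega>)" for \<omega>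
      using k by (simp add: SY lessThan_atLeast0 sum.atLeastLessThan_concat)
    have "(\<integral>\<^sup>+\<omega>. indicator (E k) \<omega> * ennreal (exp (l * S N \<omega>)) \<partial>M) = (\<integral>\<^sup>+\<omega>. (g1 \<circ> R1) \<omega> * (g2 \<circ> R2) \<omega> \<partial>M)"
      by (intro nn_integral_cong) (simp add: eq1 eq2 split exp_add ring_distribs ennreal_mult' mult.assoc)
    also have "\<dots> = (\<integral>\<^sup>+\<omega>. (g1\<circ>R1) \<omega> \<partial>M) * (\<integral>\<^sup>+\<omega>. (g2\<circ>R2) \<omega> \<partial>M)"
      by (rule indep_var_nn_integral[OF ind])
    finally have eq: "(\<integral>\<^sup>+\<omega>. indicator (E k) \<omega> * ennreal (exp (l * S N \<omega>)) \<partial>M) =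
       (\<integral>\<^sup>+\<omega>. (g1\<circ>R1) \<omega> \<partial>M) * (\<integral>\<^sup>+\<omega>. (g2\<circ>R2) \<omega> \<partial>M)" .
    have ge1: "1 \<le> (\<integral>\<^sup>+\<omega>. (g2\<circ>R2) \<omega> \<partial>M)"
    proof -
      have "(\<integral>\<^sup>+\<omega>. (g2\<circ>R2) \<omega> \<partial>M) = (\<integral>\<^sup>+\<omega>. (\<Prod>i\<in>{k..<N}. ennreal (exp (l * Y i \<omega>))) \<partial>M)"
        by (intro nn_integral_cong) (simp add: eq2 sum_distrib_left exp_sum prod_ennreal)
      also have "\<dots> = (\<Prod>i\<in>{k..<N}. \<integral>\<^sup>+\<omega>. ennreal (exp (l * Y i \<omega>)) \<partial>M)"
        by (intro indep_vars_nn_integral indep_vars_compose2[OF indep_vars_subset[OF indep]]) auto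
      finally show ?thesis using mgf_ge by (auto intro!: prod_ge_1)
    qed
    have ge2: "ennreal (exp (l * x)) * emeasure M (E k) \<le> (\<integral>\<^sup>+\<omega>. (g1\<circ>R1) \<omega> \<partial>M)"
    proof -
      have "ennreal (exp (l * x)) * emeasure M (E k) = (\<integral>\<^sup>+\<omega>. ennreal (exp (l * x)) * indicator (E k) \<omega> \<partial>M)"
        by (simp add: nn_integral_cmult_indicator)
      also have "\<dots> \<le> (\<integral>\<^sup>+\<omega>. (g1\<circ>R1) \<omega> \<partial>M)"
      proof (intro nn_integral_mono)
        fix \<omega> assume "\<omega> \<in> space M"
        then show "ennreal (exp (l * x)) * indicator (E k) \<omega> \<le> (g1\<circ>R1) \<omega>"
          using l by (auto simp: eq1 E_def indicator_def)
      qed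
      finally show ?thesis .
    qed
    have "ennreal (exp (l * x)) * emeasure M (E k) \<le> (\<integral>\<^sup>+\<omega>. (g1\<circ>R1) \<omega> \<partial>M) * 1"
      using ge2 by simp
    also have "\<dots> \<le> (\<integral>\<^sup>+\<omega>. (g1\<circ>R1) \<omega> \<partial>M) * (\<integral>\<^sup>+\<omega>. (g2\<circ>R2) \<omega> \<partial>M)"
      by (intro mult_left_mono ge1) auto
    finally show ?thesis using eq by simp
  qed
  have disj: "disjoint_family_on E {..N}"
    unfolding disjoint_family_on_def
  proof (intro ballI impI)
    fix m n assume "m \<in> {..N}" "n \<in> {..N}" "m \<noteq> n"
    then show "E m \<inter> E n = {}"
    proof (intro equalityI subsetI)
      fix \<omega> assume w: "\<omega> \<in> E m \<inter> E n"
      show "\<omega> \<in> {}"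
      proof (cases "m < n")
        case True
        then have "S m \<omega> < x" "x \<le> S m \<omega>" using w unfolding E_def by auto
        then show ?thesis by simp
      next
        case False
        then have "n < m" using \<open>m \<noteq> n\<close> by simp
        then have "S n \<omega> < x" "x \<le> S n \<omega>" using w unfolding E_def by auto
        then show ?thesis by simp
      qed
    qed simp
  qed
  have sub: "{\<omega>\<in>space M. \<exists>n\<le>N. x \<le> (\<Sum>i<n. Y i \<omega>)} \<subseteq> (\<Union>k\<in>{..N}. E k)"
  proof
    fix \<omega> assume "\<omega> \<in> {\<omega>\<in>space M. \<exists>n\<le>N. x \<le> (\<Sum>i<n. Y i \<omega>)}"
    then obtain n where n: "n \<le> N" "x \<le> S n \<omega>" "\<omega> \<in> space M" using SY by auto
    define k where "k = (LEAST n. x \<le> S n \<omega>)"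
    have k1: "x \<le> S k \<omega>" unfolding k_def by (rule LeastI[of _ n]) (use n in auto)
    have k2: "k \<le> n" unfolding k_def by (rule Least_le) (use n in auto)
    have k3: "S j \<omega> < x" if "j < k" for j
      using not_less_Least[of j "\<lambda>n. x \<le> S n \<omega>"] that unfolding k_def by auto
    show "\<omega> \<in> (\<Union>k\<in>{..N}. E k)" using k1 k2 k3 n by (auto simp: E_def intro!: bexI[of _ k])
  qed
  let ?A = "{\<omega>\<in>space M. \<exists>n\<le>N. x \<le> (\<Sum>i<n. Y i \<omega>)}"
  have "ennreal (exp (l * x)) * emeasure M ?A \<le> ennreal (exp (l * x)) * (\<Sum>k\<in>{..N}. emeasure M (E k))"
  proof (intro mult_left_mono)
    have "emeasure M ?A \<le> emeasure M (\<Union>k\<in>{..N}. E k)"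
      by (intro emeasure_mono sub) auto
    also have "\<dots> \<le> (\<Sum>k\<in>{..N}. emeasure M (E k))"
      by (intro emeasure_subadditive_finite) auto
    finally show "emeasure M ?A \<le> (\<Sum>k\<in>{..N}. emeasure M (E k))" .
  qed auto
  also have "\<dots> = (\<Sum>k\<in>{..N}. ennreal (exp (l * x)) * emeasure M (E k))"
    by (simp add: sum_distrib_left)
  also have "\<dots> \<le> (\<Sum>k\<in>{..N}. \<integral>\<^sup>+\<omega>. indicator (E k) \<omega> * ennreal (exp (l * S N \<omega>)) \<partial>M)"
    by (intro sum_mono step) auto
  also have "\<dots> = (\<integral>\<^sup>+\<omega>. (\<Sum>k\<in>{..N}. indicator (E k) \<omega>) * ennreal (exp (l * S N \<omega>)) \<partial>M)"
    unfolding sum_distrib_right by (rule nn_integral_sum[symmetric]) auto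
  also have "\<dots> = (\<integral>\<^sup>+\<omega>. indicator (\<Union>k\<in>{..N}. E k) \<omega> * ennreal (exp (l * S N \<omega>)) \<partial>M)"
    by (subst indicator_UN_disjoint[OF _ disj]) auto
  also have "\<dots> \<le> (\<integral>\<^sup>+\<omega>. ennreal (exp (l * S N \<omega>)) \<partial>M)"
    by (intro nn_integral_mono) (auto simp: indicator_def)
  also have "\<dots> \<le> ennreal (exp (N * l\<^sup>2 / 8))" by (rule total)
  finally have "ennreal (exp (l * x)) * emeasure M ?A \<le> ennreal (exp (N * l\<^sup>2 / 8))" .
  then have "exp (l * x) * prob ?A \<le> exp (N * l\<^sup>2 / 8)"
    by (simp add: emeasure_eq_measure ennreal_mult'[symmetric] del: ennreal_mult)
  then have "prob ?A \<le> exp (N * l\<^sup>2 / 8) / exp (l * x)"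
    by (simp add: field_simps)
  also have "\<dots> = exp (N * l\<^sup>2 / 8 - l * x)" by (simp add: exp_diff)
  also have "N * l\<^sup>2 / 8 - l * x = -2*x\<^sup>2/N"
    using N by (simp add: l_def field_simps power2_eq_square)
  finally show ?thesis .
qed



lemma ln3_gt1: "ln (3::real) > 1"
proof -
  have "exp 1 < (3::real)" using e_less_272 by simp
  then show ?thesis by (metis exp_less_cancel_iff exp_ln zero_less_numeral)
qed

lemma ln_gt1: "(3::real) \<le> x \<Longrightarrow> ln x > 1"
  using ln3_gt1 by (smt (verit) ln_le_cancel_iff)

lemma ucb_f_eq: "t \<ge> 3 \<Longrightarrow> ucb_f t = ln (real t) + 3 * ln (ln (real t))"
  by (simp add: ucb_f_def max_def)

lemma ucb_f_mono: "t \<le> T \<Longrightarrow> ucb_f t \<le> ucb_f T"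
proof -
  assume tT: "t \<le> T"
  have a: "real (max t 3) \<le> real (max T 3)" using tT by simp
  have b: "3 \<le> real (max t 3)" by simp
  have l1: "ln (real (max t 3)) \<le> ln (real (max T 3))" using a b by simp
  have l2: "ln (ln (real (max t 3))) \<le> ln (ln (real (max T 3)))"
    using l1 ln_gt1[OF b] by simp
  show ?thesis unfolding ucb_f_def using l1 l2 by linarith
qed

lemma ucb_f_pos: "ucb_f t > 0"
proof -
  have b: "3 \<le> real (max t 3)" by simp
  have "ln (real (max t 3)) > 1" using ln_gt1[OF b] .
  moreover from this have "ln (ln (real (max t 3))) > 0" by simp
  ultimately show ?thesis unfolding ucb_f_def by linarith
qed

lemma lnln_step:
  fixes t :: real assumes t: "t \<ge> 4"
  shows "1 / (t * ln t) \<le> ln (ln t) - ln (ln (t - 1))"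
proof -
  have l1: "ln (t - 1) > 1" using ln_gt1[of "t - 1"] t by simp
  have l2: "ln t > 1" using ln_gt1[of t] t by simp
  have d1: "ln t - ln (t - 1) \<ge> 1 / t"
  proof -
    have "ln ((t - 1) / t) \<le> (t - 1) / t - 1" by (rule ln_le_minus_one) (use t in simp)
    also have "\<dots> = - (1 / t)" using t by (simp add: field_simps)
    finally show ?thesis using t by (simp add: ln_div)
  qed
  have d2: "ln (ln (t - 1)) - ln (ln t) \<le> ln (t - 1) / ln t - 1"
  proof -
    have "ln (ln (t - 1) / ln t) \<le> ln (t - 1) / ln t - 1" by (rule ln_le_minus_one) (use l1 l2 in simp)
    then show ?thesis using l1 l2 by (simp add: ln_div)
  qed
  have "1 / (t * ln t) = (1 / t) / ln t" by simp
  also have "\<dots> \<le> (ln t - ln (t - 1)) / ln t" using d1 l2 by (intro divide_right_mono) auto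
  also have "\<dots> = 1 - ln (t - 1) / ln t" using l2 by (simp add: field_simps)
  also have "\<dots> \<le> ln (ln t) - ln (ln (t - 1))" using d2 by simp
  finally show ?thesis .
qed

lemma lnln_sum:
  fixes T :: nat assumes "T \<ge> 4"
  shows "(\<Sum>t\<in>{4..<T}. 1 / (real t * ln (real t))) \<le> ln (ln (real T - 1)) - ln (ln 3)"
  using assms
proof (induction T rule: dec_induct)
  case base
  then show ?case by simp
next
  case (step n)
  have "(\<Sum>t\<in>{4..<Suc n}. 1 / (real t * ln (real t))) = (\<Sum>t\<in>{4..<n}. 1 / (real t * ln (real t))) + 1 / (real n * ln (real n))"
    using step.hyps by simp
  also have "\<dots> \<le> ln (ln (real n - 1)) - ln (ln 3) + (ln (ln (real n)) - ln (ln (real n - 1)))"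
    using step.IH lnln_step[of "real n"] step.hyps by (intro add_mono) auto
  finally show ?case by simp
qed

lemma lnln_sum':
  fixes T :: nat assumes "T \<ge> 3"
  shows "(\<Sum>t\<in>{4..<T}. 1 / (real t * ln (real t))) \<le> ln (ln (real T))"
proof (cases "T \<ge> 4")
  case True
  have "ln (ln (real T - 1)) \<le> ln (ln (real T))"
    using ln_gt1[of "real T - 1"] True by simp
  moreover have "ln (ln (3::real)) > 0" using ln3_gt1 by simp
  ultimately show ?thesis using lnln_sum[OF True] by linarith
next
  case False
  then have "T = 3" using assms by simp
  then show ?thesis using ln3_gt1 by simp
qed



lemma length_run[simp]: "length (run \<pi> \<omega> t) = t"
  by (induction t) (auto simp: Let_def)

lemma num_pulls_Suc:
  "num_pulls (run \<pi> \<omega> (Suc t)) b = num_pulls (run \<pi> \<omega> t) b + (if \<pi> (run \<pi> \<omega> t) = b then 1 else 0)"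
  by (simp add: num_pulls_def Let_def)

lemma filter_run:
  "filter (\<lambda>p. fst p = b) (run \<pi> \<omega> t) = map (\<lambda>i. (b, \<omega> (b, i))) [0..<num_pulls (run \<pi> \<omega> t) b]"
proof (induction t)
  case 0
  then show ?case by (simp add: num_pulls_def)
next
  case (Suc t)
  have r: "run \<pi> \<omega> (Suc t) = run \<pi> \<omega> t @ [(\<pi> (run \<pi> \<omega> t), \<omega> (\<pi> (run \<pi> \<omega> t), num_pulls (run \<pi> \<omega> t) (\<pi> (run \<pi> \<omega> t))))]"
    by (simp add: Let_def num_pulls_def)
  show ?case
  proof (cases "\<pi> (run \<pi> \<omega> t) = b")
    case True
    then show ?thesis using Suc by (subst num_pulls_Suc, subst r) (simp del: run.simps)
  next
    case False
    then show ?thesis using Suc by (subst num_pulls_Suc, subst r) (simp del: run.simps)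
  qed
qed

lemma emp_mean_run:
  "emp_mean (run \<pi> \<omega> t) b = (\<Sum>i<num_pulls (run \<pi> \<omega> t) b. \<omega> (b, i)) / real (num_pulls (run \<pi> \<omega> t) b)"
proof -
  have "(\<Sum>p\<leftarrow>filter (\<lambda>p. fst p = b) (run \<pi> \<omega> t). snd p) = (\<Sum>i<num_pulls (run \<pi> \<omega> t) b. \<omega> (b, i))"
    by (simp add: filter_run o_def interv_sum_list_conv_sum_set_nat atLeast0LessThan)
  then show ?thesis by (simp add: emp_mean_def)
qed

lemma num_pulls_le: "num_pulls (run \<pi> \<omega> t) b \<le> t"
  unfolding num_pulls_def by (metis length_filter_le length_run)

lemma num_pulls_mono: "t \<le> t' \<Longrightarrow> num_pulls (run \<pi> \<omega> t) b \<le> num_pulls (run \<pi> \<omega> t') b"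
proof (induction t' rule: dec_induct)
  case (step n) then show ?case by (simp add: num_pulls_Suc del: run.simps)
qed simp

lemma num_pulls_sum:
  "num_pulls (run \<pi> \<omega> T) b = (\<Sum>t<T. if \<pi> (run \<pi> \<omega> t) = b then 1 else 0)"
  by (induction T) (simp add: num_pulls_def, simp add: num_pulls_Suc del: run.simps)

lemma num_pulls_pos:
  assumes ucb: "is_ucb_policy K \<pi>" and b: "b < K" and t: "K \<le> t"
  shows "1 \<le> num_pulls (run \<pi> \<omega> t) b"
proof -
  have "\<pi> (run \<pi> \<omega> b) = b" using ucb b unfolding is_ucb_policy_def by simp
  then have "num_pulls (run \<pi> \<omega> (Suc b)) b \<ge> 1" by (simp add: num_pulls_Suc del: run.simps)
  also have "num_pulls (run \<pi> \<omega> (Suc b)) b \<le> num_pulls (run \<pi> \<omega> t) b"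
    using b t by (intro num_pulls_mono) simp
  finally show ?thesis .
qed

definition Estar :: "nat \<Rightarrow> real \<Rightarrow> nat \<Rightarrow> (nat \<times> nat \<Rightarrow> real) set" where
  "Estar s m t = {\<omega>. \<exists>n\<in>{1..t}. (\<Sum>i<n. \<omega> (s, i)) / real n + sqrt (ucb_f t / (2 * real n)) < m}"

definition Ba :: "nat \<Rightarrow> real \<Rightarrow> nat \<Rightarrow> nat \<Rightarrow> (nat \<times> nat \<Rightarrow> real) set" where
  "Ba a m T n = {\<omega>. m \<le> (\<Sum>i<n. \<omega> (a, i)) / real n + sqrt (ucb_f T / (2 * real n))}"

lemma pointwise:
  assumes ucb: "is_ucb_policy K \<pi>" and s: "s < K" and a: "a < K"
  shows "real (num_pulls (run \<pi> \<omega> T) a) \<le> 1 + (\<Sum>t\<in>{K..<T}. indicator (Estar s m t) \<omega>)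
            + (\<Sum>n\<in>{1..T}. indicator (Ba a m T n) \<omega>)"
proof -
  define A where "A t = \<pi> (run \<pi> \<omega> t)" for t
  define Np where "Np b t = num_pulls (run \<pi> \<omega> t) b" for b t
  have At: "A t = t" if "t < K" for t using ucb that unfolding is_ucb_policy_def A_def by simp
  have split: "{..<T} = {..<min T K} \<union> {K..<T}" by auto
  have "num_pulls (run \<pi> \<omega> T) a = (\<Sum>t<T. if A t = a then 1 else 0)"
    by (simp add: num_pulls_sum A_def)
  also have "\<dots> = (\<Sum>t<min T K. if A t = a then 1 else 0) + (\<Sum>t\<in>{K..<T}. if A t = a then 1 else 0)"
    by (subst split, rule sum.union_disjoint) auto
  finally have eq: "num_pulls (run \<pi> \<omega> T) a = (\<Sum>t<min T K. if A t = a then 1 else 0) + (\<Sum>t\<in>{K..<T}. if A t = a then 1 else 0)" .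
  have first: "(\<Sum>t<min T K. if A t = a then 1 else 0::nat) \<le> 1"
  proof -
    have "(\<Sum>t<min T K. if A t = a then 1 else 0::nat) = (\<Sum>t<min T K. if t = a then 1 else 0)"
      by (intro sum.cong) (auto simp: At)
    also have "\<dots> = card ({..<min T K} \<inter> {a})" by (simp add: sum.If_cases)
    also have "\<dots> \<le> card {a}" by (intro card_mono) auto
    finally show ?thesis by simp
  qed
  define G where "G = {t\<in>{K..<T}. A t = a \<and> \<omega> \<notin> Estar s m t}"
  have second: "(\<Sum>t\<in>{K..<T}. if A t = a then 1 else 0::real) \<le> (\<Sum>t\<in>{K..<T}. indicator (Estar s m t) \<omega>) + real (card G)"
  proof -
    have "(\<Sum>t\<in>{K..<T}. if A t = a then 1 else 0::real) \<le> (\<Sum>t\<in>{K..<T}. indicator (Estar s m t) \<omega> + indicator G t)"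
    proof (rule sum_mono)
      fix t assume t: "t \<in> {K..<T}"
      show "(if A t = a then 1 else 0::real) \<le> indicator (Estar s m t) \<omega> + indicator G t"
      proof (cases "A t = a")
        case True
        show ?thesis
        proof (cases "\<omega> \<in> Estar s m t")
          case True then show ?thesis by simp
        next
          case False
          then have "t \<in> G" using t \<open>A t = a\<close> by (simp add: G_def)
          then show ?thesis by simp
        qed
      qed simp
    qed
    also have "\<dots> = (\<Sum>t\<in>{K..<T}. indicator (Estar s m t) \<omega>) + (\<Sum>t\<in>{K..<T}. indicator G t)"
      by (simp add: sum.distrib)
    also have "(\<Sum>t\<in>{K..<T}. indicator G t) = (\<Sum>t\<in>G. 1::real)"
      by (rule sum.mono_neutral_cong_right) (auto simp: G_def)
    finally show ?thesis by simp
  qed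
  have card: "card G \<le> card {n\<in>{1..T}. \<omega> \<in> Ba a m T n}"
  proof (rule card_inj_on_le)
    show "inj_on (Np a) G"
    proof (rule inj_onI)
      fix t t' assume tG: "t \<in> G" and t'G: "t' \<in> G" and eqN: "Np a t = Np a t'"
      show "t = t'"
      proof (rule ccontr)
        assume "t \<noteq> t'"
        then consider "t < t'" | "t' < t" by linarith
        then show False
        proof cases
          case 1
          have "Np a (Suc t) = Np a t + 1" using tG by (simp add: Np_def num_pulls_Suc G_def A_def del: run.simps)
          moreover have "Np a (Suc t) \<le> Np a t'" using 1 unfolding Np_def by (intro num_pulls_mono) simp
          ultimately show False using eqN by simp
        next
          case 2
          have "Np a (Suc t') = Np a t' + 1" using t'G by (simp add: Np_def num_pulls_Suc G_def A_def del: run.simps)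
          moreover have "Np a (Suc t') \<le> Np a t" using 2 unfolding Np_def by (intro num_pulls_mono) simp
          ultimately show False using eqN by simp
        qed
      qed
    qed
    show "Np a ` G \<subseteq> {n\<in>{1..T}. \<omega> \<in> Ba a m T n}"
    proof
      fix n assume "n \<in> Np a ` G"
      then obtain t where tG: "t \<in> G" and n: "n = Np a t" by auto
      have Kt: "K \<le> t" "t < T" "A t = a" "\<omega> \<notin> Estar s m t" using tG by (auto simp: G_def)
      define ns where "ns = Np s t"
      have ns: "1 \<le> ns" "ns \<le> t" using num_pulls_pos[OF ucb s Kt(1)] num_pulls_le
        by (auto simp: ns_def Np_def)
      have n1: "1 \<le> n" "n \<le> t" using num_pulls_pos[OF ucb a Kt(1)] num_pulls_le
        by (auto simp: n Np_def)
      have "m \<le> (\<Sum>i<ns. \<omega> (s, i)) / real ns + sqrt (ucb_f t / (2 * real ns))"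
        using Kt(4) ns unfolding Estar_def by (auto simp: not_less)
      also have "\<dots> = ucb_index (run \<pi> \<omega> t) s"
        by (simp add: ucb_index_def emp_mean_run ns_def Np_def)
      also have "\<dots> \<le> ucb_index (run \<pi> \<omega> t) a"
        using ucb s Kt(1,3) unfolding is_ucb_policy_def A_def by auto
      also have "\<dots> = (\<Sum>i<n. \<omega> (a, i)) / real n + sqrt (ucb_f t / (2 * real n))"
        by (simp add: ucb_index_def emp_mean_run n Np_def)
      also have "\<dots> \<le> (\<Sum>i<n. \<omega> (a, i)) / real n + sqrt (ucb_f T / (2 * real n))"
      proof -
        have "ucb_f t / (2 * real n) \<le> ucb_f T / (2 * real n)"
          using ucb_f_mono[of t T] Kt(2) n1 by (intro divide_right_mono) auto
        then show ?thesis by simp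
      qed
      finally have "\<omega> \<in> Ba a m T n" unfolding Ba_def by simp
      then show "n \<in> {n\<in>{1..T}. \<omega> \<in> Ba a m T n}"
        using n1 Kt(2) by simp
    qed
  qed simp
  have "real (card {n\<in>{1..T}. \<omega> \<in> Ba a m T n}) = (\<Sum>n\<in>{1..T}. indicator (Ba a m T n) \<omega>)"
  proof -
    have "{n\<in>{1..T}. \<omega> \<in> Ba a m T n} = {1..T} \<inter> {n. \<omega> \<in> Ba a m T n}" by auto
    then show ?thesis by (simp add: indicator_def sum.If_cases)
  qed
  then have card': "real (card G) \<le> (\<Sum>n\<in>{1..T}. indicator (Ba a m T n) \<omega>)"
  proof -
    have "real (card G) \<le> real (card {n\<in>{1..T}. \<omega> \<in> Ba a m T n})" using card by (simp only: of_nat_le_iff)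
    then show ?thesis using \<open>real (card {n\<in>{1..T}. \<omega> \<in> Ba a m T n}) = _\<close> by linarith
  qed
  have c2: "real (\<Sum>t\<in>{K..<T}. if A t = a then 1 else 0::nat) = (\<Sum>t\<in>{K..<T}. if A t = a then 1 else 0::real)"
    unfolding of_nat_sum by (intro sum.cong) auto
  have c1: "real (\<Sum>t<min T K. if A t = a then 1 else 0::nat) \<le> 1" using first by (simp only: of_nat_le_1_iff)
  have "real (num_pulls (run \<pi> \<omega> T) a) = real (\<Sum>t<min T K. if A t = a then 1 else 0::nat) + real (\<Sum>t\<in>{K..<T}. if A t = a then 1 else 0::nat)"
    by (simp only: eq of_nat_add)
  then show ?thesis using c1 c2 second card' by linarith
qed



locale bandit =
  fixes K :: nat and \<nu> :: "nat \<Rightarrow> real measure"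
  assumes K: "K \<ge> 1"
    and P: "\<And>b. b < K \<Longrightarrow> prob_space (\<nu> b)"
    and S: "\<And>b. b < K \<Longrightarrow> sets (\<nu> b) = sets borel"
    and AB: "\<And>b. b < K \<Longrightarrow> AE x in \<nu> b. x \<in> {0..1}"
begin

abbreviation "I \<equiv> {0..<K} \<times> (UNIV::nat set)"
abbreviation "Mr \<equiv> reward_space K \<nu>"

lemma Mr_eq: "Mr = PiM I (\<lambda>i. \<nu> (fst i))" by (simp add: reward_space_def)

lemma prob_Mr: "prob_space Mr"
  unfolding reward_space_def by (rule prob_space_PiM) (auto intro: P)

sublocale M: prob_space Mr by (rule prob_Mr)

lemma indep_all: "M.indep_vars (\<lambda>i. \<nu> (fst i)) (\<lambda>i \<omega>. \<omega> i) I"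
proof -
  have rv: "(\<lambda>\<omega>. \<omega> i) \<in> measurable Mr (\<nu> (fst i))" if "i \<in> I" for i
    unfolding reward_space_def using that by (rule measurable_component_singleton)
  have "distr Mr (PiM I (\<lambda>i. \<nu> (fst i))) (\<lambda>x. \<lambda>i\<in>I. x i) = distr Mr Mr (\<lambda>x. x)"
    by (rule distr_cong) (auto simp: reward_space_def space_PiM PiE_def extensional_restrict)
  also have "\<dots> = Mr" by simp
  also have "Mr = PiM I (\<lambda>i. distr Mr (\<nu> (fst i)) (\<lambda>\<omega>. \<omega> i))"
  proof -
    have "PiM I (\<lambda>i. distr Mr (\<nu> (fst i)) (\<lambda>\<omega>. \<omega> i)) = PiM I (\<lambda>i. \<nu> (fst i))"
      unfolding reward_space_def by (intro PiM_cong refl distr_PiM_component) (auto intro: P)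
    then show ?thesis by (simp add: reward_space_def)
  qed
  finally show ?thesis
    by (subst M.indep_vars_iff_distr_eq_PiM') (use K rv in auto)
qed

lemma meas_comp_nu: "b < K \<Longrightarrow> (\<lambda>\<omega>. \<omega> (b, i)) \<in> measurable Mr (\<nu> b)"
  unfolding reward_space_def using measurable_component_singleton[of "(b,i)" I "\<lambda>i. \<nu> (fst i)"] by simp

lemma meas_comp: "b < K \<Longrightarrow> (\<lambda>\<omega>. \<omega> (b, i)) \<in> borel_measurable Mr"
proof -
  assume b: "b < K"
  have "measurable Mr (\<nu> b) = measurable Mr borel" by (rule measurable_cong_sets[OF refl S[OF b]])
  then show ?thesis using meas_comp_nu[OF b, of i] by simp
qed

lemma indep_arm:
  assumes b: "b < K" shows "M.indep_vars (\<lambda>_. borel) (\<lambda>i \<omega>. \<omega> (b, i)) {0..<N}"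
proof -
  have "M.indep_vars (\<lambda>j. \<nu> (fst (b, j))) (\<lambda>j \<omega>. \<omega> (b, j)) {0..<N}"
    by (rule M.indep_vars_reindex[OF indep_all]) (auto simp: inj_on_def b)
  then show ?thesis
    using S[OF b] meas_comp[OF b] unfolding M.indep_vars_def2 by auto
qed

lemma AE_comp: "b < K \<Longrightarrow> AE \<omega> in Mr. \<omega> (b, i) \<in> {0..1}"
proof -
  assume b: "b < K"
  have "AE x in PiM I (\<lambda>i. \<nu> (fst i)). x (b,i) \<in> {0..1}"
    apply (rule AE_PiM_component)
    using P b apply force
    using b apply force
    apply (subst fst_conv) apply (rule AB[OF b])
    done
  then show ?thesis unfolding reward_space_def .
qed

lemma int_comp:
  fixes g :: "real \<Rightarrow> real"
  assumes b: "b < K" and g: "g \<in> borel_measurable borel"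
  shows "(\<integral>\<omega>. g (\<omega> (b, i)) \<partial>Mr) = (\<integral>x. g x \<partial>\<nu> b)"
proof -
  have d: "distr Mr (\<nu> b) (\<lambda>\<omega>. \<omega> (b, i)) = \<nu> b"
    unfolding reward_space_def using distr_PiM_component[of I "\<lambda>i. \<nu> (fst i)" "(b,i)"] b P by auto
  have "measurable (\<nu> b) (borel::real measure) = measurable borel borel" by (rule measurable_cong_sets[OF S[OF b] refl])
  then have g': "g \<in> borel_measurable (\<nu> b)" using g by simp
  have "(\<integral>x. g x \<partial>\<nu> b) = (\<integral>x. g x \<partial>distr Mr (\<nu> b) (\<lambda>\<omega>. \<omega> (b, i)))" by (simp add: d)
  also have "\<dots> = (\<integral>\<omega>. g (\<omega> (b, i)) \<partial>Mr)"
    by (rule integral_distr[OF meas_comp_nu[OF b] g'])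
  finally show ?thesis by simp
qed

lemma integrable_nu: "b < K \<Longrightarrow> integrable (\<nu> b) (\<lambda>x. x)"
proof -
  assume b: "b < K"
  interpret P: prob_space "\<nu> b" using P[OF b] .
  have "measurable (\<nu> b) (borel::real measure) = measurable borel borel" by (rule measurable_cong_sets[OF S[OF b] refl])
  then have m: "(\<lambda>x. x) \<in> borel_measurable (\<nu> b)" by simp
  show ?thesis
  proof (rule P.integrable_const_bound[where B=1])
    show "AE x in \<nu> b. norm x \<le> 1" using AB[OF b] by eventually_elim auto
  qed (rule m)
qed

lemma dev:
  assumes b: "b < K" and N: "N > 0" and x: "x > 0" and sg: "\<sigma> = 1 \<or> \<sigma> = -1"
  shows "M.prob {\<omega>\<in>space Mr. \<exists>n\<le>N. x \<le> (\<Sum>i<n. \<sigma> * (\<omega> (b, i) - arm_mean \<nu> b))} \<le> exp (-2*x\<^sup>2/N)"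
proof -
  define \<mu> where "\<mu> = arm_mean \<nu> b"
  define c where "c = (if \<sigma> = 1 then - \<mu> else \<mu> - 1)"
  interpret P: prob_space "\<nu> b" using P[OF b] .
  have ind: "M.indep_vars (\<lambda>_. borel) (\<lambda>i \<omega>. \<sigma> * (\<omega> (b, i) - \<mu>)) {0..<N}"
    by (rule M.indep_vars_compose2[OF indep_arm[OF b], where Y = "\<lambda>i z. \<sigma> * (z - \<mu>)"]) auto
  have bnd: "AE \<omega> in Mr. \<sigma> * (\<omega> (b, i) - \<mu>) \<in> {c..c + 1}" if "i < N" for i
    using AE_comp[OF b, of i] by eventually_elim (use sg in \<open>auto simp: c_def\<close>)
  have mean0: "M.expectation (\<lambda>\<omega>. \<sigma> * (\<omega> (b, i) - \<mu>)) = 0" if "i < N" for i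
  proof -
    have "M.expectation (\<lambda>\<omega>. \<sigma> * (\<omega> (b, i) - \<mu>)) = (\<integral>z. \<sigma> * (z - \<mu>) \<partial>\<nu> b)"
      by (rule int_comp[OF b, of "\<lambda>z. \<sigma> * (z - \<mu>)"]) simp
    also have "\<dots> = \<sigma> * ((\<integral>z. z \<partial>\<nu> b) - \<mu>)"
      using integrable_nu[OF b] by (simp add: P.prob_space)
    also have "\<dots> = 0" by (simp add: \<mu>_def arm_mean_def)
    finally show ?thesis .
  qed
  have "M.prob {\<omega>\<in>space Mr. \<exists>n\<le>N. x \<le> (\<Sum>i<n. \<sigma> * (\<omega> (b, i) - \<mu>))} \<le> exp (-2*x\<^sup>2/N)"
    by (rule M.maximal_hoeffding[where c="\<lambda>_. c", OF ind bnd mean0 x N])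
  then show ?thesis by (simp add: \<mu>_def)
qed

end


lemma ex_pow_bracket:
  fixes g y :: real assumes g: "g > 1" and y: "1 \<le> y"
  shows "\<exists>k. g ^ k \<le> y \<and> y < g ^ Suc k"
proof -
  obtain j where j: "y < g ^ j" using real_arch_pow[OF g] by blast
  define k0 where "k0 = (LEAST j. y < g ^ j)"
  have k0: "y < g ^ k0" unfolding k0_def by (rule LeastI[of _ j]) (rule j)
  have k0ne: "k0 \<noteq> 0"
  proof
    assume "k0 = 0" then show False using k0 y by simp
  qed
  then obtain k where kk: "k0 = Suc k" by (cases k0) auto
  have "\<not> y < g ^ k" using not_less_Least[of k "\<lambda>j. y < g ^ j"] kk unfolding k0_def by simp
  then show ?thesis using k0 kk by (intro exI[of _ k]) auto
qed

lemma ln_one_plus_ge: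
  fixes x :: real assumes x: "x > 0" shows "x / (1 + x) \<le> ln (1 + x)"
proof -
  have "ln (1 / (1 + x)) \<le> 1 / (1 + x) - 1" by (rule ln_le_minus_one) (use x in simp)
  also have "1 / (1 + x) - 1 = - (x / (1 + x))" using x by (simp add: field_simps)
  finally show ?thesis using x by (simp add: ln_div)
qed

lemma estar_numeric:
  fixes t :: nat assumes t: "t \<ge> 3"
  shows "real (nat \<lfloor>(ucb_f t + 1) * ln (real t)\<rfloor> + 1) * (exp 1 * exp (- ucb_f t))
        \<le> 4 * exp 1 / (real t * ln (real t))"
proof -
  define L where "L = ln (real t)"
  have L: "L > 1" unfolding L_def using ln_gt1[of "real t"] t by simp
  have f: "ucb_f t = L + 3 * ln L" unfolding L_def by (rule ucb_f_eq[OF t])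
  have lnL: "ln L \<le> L - 1" using ln_le_minus_one L by simp
  have lnL0: "ln L > 0" using L by simp
  have Kp: "real (nat \<lfloor>(ucb_f t + 1) * L\<rfloor> + 1) \<le> (ucb_f t + 1) * L + 1"
  proof -
    have "0 \<le> (ucb_f t + 1) * L" using f lnL0 L by simp
    then show ?thesis by (simp add: of_nat_nat)
  qed
  have ef: "exp (- ucb_f t) = 1 / (real t * L ^ 3)"
  proof -
    have "exp (- ucb_f t) = exp (- ln (real t)) * exp (- (3 * ln L))" by (simp add: f L_def exp_add[symmetric])
    also have "exp (- ln (real t)) = 1 / real t" using t by (simp add: exp_minus inverse_eq_divide)
    also have "exp (- (3 * ln L)) = 1 / L ^ 3"
    proof -
      have "exp (3 * ln L) = exp (ln L) ^ 3" by (rule exp_of_nat_mult[of 3, simplified])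
      also have "\<dots> = L ^ 3" using L by simp
      finally show ?thesis by (simp add: exp_minus inverse_eq_divide)
    qed
    finally show ?thesis by simp
  qed
  have "real (nat \<lfloor>(ucb_f t + 1) * L\<rfloor> + 1) * (exp 1 * exp (- ucb_f t)) \<le> ((ucb_f t + 1) * L + 1) * (exp 1 * exp (- ucb_f t))"
    by (intro mult_right_mono Kp) auto
  also have "\<dots> \<le> ((4 * L - 2) * L + 1) * (exp 1 * exp (- ucb_f t))"
    using f lnL L by (intro mult_right_mono) (auto intro!: mult_right_mono)
  also have "\<dots> \<le> (4 * L * L) * (exp 1 * exp (- ucb_f t))"
    using L by (intro mult_right_mono) (auto simp: algebra_simps)
  also have "\<dots> = 4 * exp 1 / (real t * L)"
    using L t by (simp add: ef field_simps power3_eq_cube)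
  finally show ?thesis by (simp add: L_def)
qed



context bandit
begin

lemma prob_Ba:
  assumes a: "a < K" and n: "n \<ge> 1" and D: "\<Delta> = m - arm_mean \<nu> a"
    and pos: "\<Delta> * sqrt n > sqrt (ucb_f T / 2)"
  shows "M.prob (space Mr \<inter> Ba a m T n) \<le> exp (-2 * (\<Delta> * sqrt n - sqrt (ucb_f T / 2))\<^sup>2)"
proof -
  define c where "c = sqrt (ucb_f T / 2)"
  define \<mu> where "\<mu> = arm_mean \<nu> a"
  define x where "x = sqrt n * (\<Delta> * sqrt n - c)"
  have sn: "sqrt (real n) > 0" using n by simp
  have x: "x > 0" using pos sn unfolding x_def c_def by simp
  note [measurable] = meas_comp[OF a]
  let ?B = "{\<omega>\<in>space Mr. \<exists>k\<le>n. x \<le> (\<Sum>i<k. 1 * (\<omega> (a, i) - arm_mean \<nu> a))}"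
  have Bm: "?B \<in> M.events" by measurable
  have sub: "space Mr \<inter> Ba a m T n \<subseteq> ?B"
  proof
    fix \<omega> assume w: "\<omega> \<in> space Mr \<inter> Ba a m T n"
    define Sm where "Sm = (\<Sum>i<n. \<omega> (a, i))"
    have h: "m \<le> Sm / n + sqrt (ucb_f T / (2 * n))" using w by (simp add: Ba_def Sm_def)
    have sq: "sqrt (ucb_f T / (2 * n)) = c / sqrt n"
      unfolding c_def by (simp add: real_sqrt_divide[symmetric] field_simps)
    have nn: "real n = sqrt n * sqrt n" by simp
    have "n * m \<le> Sm + sqrt n * c"
    proof -
      have "n * m \<le> n * (Sm / n + c / sqrt n)" using h sq n by (intro mult_left_mono) auto
      also have "\<dots> = Sm + sqrt n * c" using sn n by (subst (2) nn) (simp add: field_simps)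
      finally show ?thesis .
    qed
    then have "x \<le> Sm - n * \<mu>"
      unfolding x_def D \<mu>_def using nn by (simp add: algebra_simps)
    moreover have "(\<Sum>i<n. 1 * (\<omega> (a, i) - arm_mean \<nu> a)) = Sm - n * \<mu>"
      by (simp add: Sm_def sum_subtractf \<mu>_def)
    ultimately show "\<omega> \<in> ?B" using w by auto
  qed
  have "M.prob (space Mr \<inter> Ba a m T n) \<le> M.prob ?B" by (rule M.finite_measure_mono[OF sub Bm])
  also have "\<dots> \<le> exp (-2*x\<^sup>2/n)" by (rule dev[OF a _ x]) (use n in auto)
  also have "-2*x\<^sup>2/n = -2 * (\<Delta> * sqrt n - c)\<^sup>2"
    unfolding x_def using n by (simp add: power_mult_distrib)
  finally show ?thesis by (simp add: c_def)
qed


lemma prob_Estar: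
  assumes s: "s < K" and m: "m = arm_mean \<nu> s" and t: "t \<ge> 3"
  shows "M.prob (space Mr \<inter> Estar s m t) \<le> 4 * exp 1 / (real t * ln (real t))"
proof -
  define f where "f = ucb_f t"
  have f0: "f > 0" unfolding f_def by (rule ucb_f_pos)
  define g where "g = 1 + 1 / f"
  have g1: "g > 1" using f0 by (simp add: g_def)
  define Kp where "Kp = nat \<lfloor>(f + 1) * ln (real t)\<rfloor> + 1"
  define Nk where "Nk k = nat \<lfloor>g ^ Suc k\<rfloor>" for k
  define xk where "xk k = sqrt (g ^ k * f / 2)" for k
  note [measurable] = meas_comp[OF s]
  define G where "G k = {\<omega>\<in>space Mr. \<exists>n\<le>Nk k. xk k \<le> (\<Sum>i<n. (-1) * (\<omega> (s, i) - arm_mean \<nu> s))}" for k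
  have Gm: "G k \<in> M.events" for k unfolding G_def by measurable
  have Lt: "ln (real t) > 1" using ln_gt1[of "real t"] t by simp
  have lng: "ln g \<ge> 1 / (f + 1)"
  proof -
    have "(1/f) / (1 + 1/f) \<le> ln (1 + 1/f)" by (rule ln_one_plus_ge) (use f0 in simp)
    moreover have "(1/f) / (1 + 1/f) = 1 / (f + 1)" using f0 by (simp add: field_simps)
    ultimately show ?thesis by (simp add: g_def)
  qed
  have gKp: "real t < g ^ Kp"
  proof -
    have "(f + 1) * ln (real t) < real Kp"
      unfolding Kp_def using f0 Lt by (simp add: of_nat_nat) linarith
    then have "ln (real t) < real Kp / (f + 1)" using f0 by (simp add: field_simps)
    also have "\<dots> \<le> real Kp * ln g" 
    proof -
      have "real Kp * (1 / (f + 1)) \<le> real Kp * ln g" using lng by (intro mult_left_mono) auto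
      then show ?thesis by simp
    qed
    also have "\<dots> = ln (g ^ Kp)" using g1 by (simp add: ln_realpow)
    finally have "ln (real t) < ln (g ^ Kp)" .
    moreover have "real t > 0" "g ^ Kp > 0" using g1 t by auto
    ultimately show ?thesis by (subst (asm) ln_less_cancel_iff) auto
  qed
  have cover: "space Mr \<inter> Estar s m t \<subseteq> (\<Union>k\<in>{..<Kp}. G k)"
  proof
    fix \<omega> assume w: "\<omega> \<in> space Mr \<inter> Estar s m t"
    then obtain n where n: "n \<in> {1..t}" and lt: "(\<Sum>i<n. \<omega> (s, i)) / real n + sqrt (f / (2 * real n)) < m"
      unfolding Estar_def f_def by auto
    have n1: "real n \<ge> 1" using n by simp
    obtain k where k1: "g ^ k \<le> real n" and k2: "real n < g ^ Suc k"
      using ex_pow_bracket[OF g1 n1] by blast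
    have kK: "k < Kp"
    proof (rule ccontr)
      assume "\<not> k < Kp"
      then have "g ^ Kp \<le> g ^ k" using g1 by (intro power_increasing) auto
      also have "\<dots> \<le> real t" using k1 n by simp
      finally show False using gKp by simp
    qed
    have nN: "n \<le> Nk k"
    proof -
      have "real n \<le> g ^ Suc k" using k2 by simp
      then have "int n \<le> \<lfloor>g ^ Suc k\<rfloor>" by (simp add: le_floor_iff)
      then show ?thesis unfolding Nk_def by simp
    qed
    define Sm where "Sm = (\<Sum>i<n. \<omega> (s, i))"
    have npos: "real n > 0" using n by simp
    have "real n * sqrt (f / (2 * real n)) = sqrt (real n * f / 2)"
    proof -
      have "real n * sqrt (f / (2 * real n)) = sqrt (real n ^ 2 * (f / (2 * real n)))"
        using npos by (simp only: real_sqrt_mult real_sqrt_abs2) simp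
      also have "real n ^ 2 * (f / (2 * real n)) = real n * f / 2" using npos by (simp add: power2_eq_square field_simps)
      finally show ?thesis .
    qed
    moreover have "real n * (Sm / real n + sqrt (f / (2 * real n))) < real n * m"
      using lt npos unfolding Sm_def by (intro mult_strict_left_mono) auto
    moreover have "real n * (Sm / real n + sqrt (f / (2 * real n))) = Sm + real n * sqrt (f / (2 * real n))"
      using npos by (simp add: distrib_left)
    ultimately have "sqrt (real n * f / 2) < real n * m - Sm" by linarith
    moreover have "xk k \<le> sqrt (real n * f / 2)" unfolding xk_def using k1 f0 by (simp add: divide_right_mono mult_right_mono)
    moreover have "(\<Sum>i<n. (-1) * (\<omega> (s, i) - arm_mean \<nu> s)) = real n * m - Sm"
      by (simp add: Sm_def sum_subtractf m sum_negf)
    ultimately have "xk k \<le> (\<Sum>i<n. (-1) * (\<omega> (s, i) - arm_mean \<nu> s))" by simp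
    then have "\<omega> \<in> G k" using nN w unfolding G_def by auto
    then show "\<omega> \<in> (\<Union>k\<in>{..<Kp}. G k)" using kK by auto
  qed
  have each: "M.prob (G k) \<le> exp 1 * exp (- f)" for k
  proof -
    have gk: "g ^ k > 0" "g ^ Suc k \<ge> 1" using g1 one_le_power[of g "Suc k"] by auto
    have N1: "Nk k \<ge> 1" unfolding Nk_def using gk by (simp add: le_nat_floor)
    have Nle: "real (Nk k) \<le> g ^ Suc k" unfolding Nk_def using gk by (simp add: of_nat_nat)
    have x0: "xk k > 0" unfolding xk_def using gk f0 by simp
    have "M.prob (G k) \<le> exp (-2 * (xk k)\<^sup>2 / real (Nk k))"
      unfolding G_def by (rule dev[OF s _ x0]) (use N1 in auto)
    also have "-2 * (xk k)\<^sup>2 / real (Nk k) = - (g ^ k * f) / real (Nk k)"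
      unfolding xk_def using gk f0 by simp
    also have "\<dots> \<le> - (g ^ k * f) / g ^ Suc k"
      using gk f0 N1 Nle by (intro divide_left_mono_neg) (auto simp: frac_le)
    also have "\<dots> = - (f / g)" using gk by (simp add: field_simps)
    also have "\<dots> \<le> 1 - f"
    proof -
      have "f / g = f * f / (f + 1)" using f0 by (simp add: g_def field_simps)
      moreover have "f - 1 \<le> f * f / (f + 1)" using f0 by (simp add: field_simps)
      ultimately show ?thesis by simp
    qed
    finally show ?thesis by (simp add: exp_add[symmetric])
  qed
  have "M.prob (space Mr \<inter> Estar s m t) \<le> M.prob (\<Union>k\<in>{..<Kp}. G k)"
    by (rule M.finite_measure_mono[OF cover]) (use Gm in auto)
  also have "\<dots> \<le> (\<Sum>k\<in>{..<Kp}. M.prob (G k))"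
    by (rule M.finite_measure_subadditive_finite) (use Gm in auto)
  also have "\<dots> \<le> (\<Sum>k\<in>{..<Kp}. exp 1 * exp (- f))" by (intro sum_mono each)
  also have "\<dots> = real Kp * (exp 1 * exp (- f))" by simp
  also have "\<dots> \<le> 4 * exp 1 / (real t * ln (real t))"
    unfolding Kp_def f_def by (rule estar_numeric[OF t])
  finally show ?thesis .
qed

end


lemma key_ineq:
  fixes s c :: real assumes c: "c \<ge> 0" and s: "s \<ge> c + 1"
  shows "2 * (s\<^sup>2 - (c + 1)\<^sup>2) / (c + 1) \<le> 2 * (s - c)\<^sup>2"
proof -
  have id: "2 * (s - c)\<^sup>2 * (c + 1) - 2 * (s\<^sup>2 - (c + 1)\<^sup>2) = 2 * ((s - c - 1)\<^sup>2 * c + c + 1)"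
    by (simp add: algebra_simps power2_eq_square)
  have "0 \<le> 2 * ((s - c - 1)\<^sup>2 * c + c + 1)" using c by simp
  then have "2 * (s\<^sup>2 - (c + 1)\<^sup>2) \<le> 2 * (s - c)\<^sup>2 * (c + 1)" using id by linarith
  then show ?thesis using c by (simp add: divide_simps)
qed

lemma alg_aux:
  fixes D C x :: real assumes "D > 0" "C > 0"
  shows "(2 * D / C) * (x - C\<^sup>2 / D) = 2 * (D * x - C\<^sup>2) / C"
  using assms by (simp add: field_simps power2_eq_square)

lemma geom_bound:
  fixes \<alpha> :: real assumes a: "\<alpha> > 0"
  shows "(\<Sum>j<N. exp (-\<alpha>) ^ j) \<le> 1 + 1 / \<alpha>"
proof -
  define q where "q = exp (-\<alpha>)"
  have q0: "0 < q" "q < 1" using a by (auto simp: q_def)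
  have "q * (1 + \<alpha>) \<le> 1"
  proof -
    have "1 + \<alpha> \<le> exp \<alpha>" by (rule exp_ge_add_one_self)
    then show ?thesis unfolding q_def using a by (simp add: exp_minus field_simps)
  qed
  then have qb: "1 / (1 - q) \<le> 1 + 1 / \<alpha>" using q0 a by (simp add: field_simps)
  have "(\<Sum>j<N. q ^ j) = (1 - q ^ N) / (1 - q)" using q0 by (simp add: sum_gp_strict)
  also have "\<dots> \<le> 1 / (1 - q)" using q0 by (intro divide_right_mono) auto
  finally show ?thesis using qb by (simp add: q_def)
qed


context bandit
begin

lemma sum_Ba:
  assumes a: "a < K" and D: "\<Delta> = m - arm_mean \<nu> a" and Dpos: "\<Delta> > 0"
  shows "(\<Sum>n\<in>{1..T}. M.prob (space Mr \<inter> Ba a m T n))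
     \<le> (sqrt (ucb_f T / 2) + 1)\<^sup>2 / \<Delta>\<^sup>2 + 1 + (sqrt (ucb_f T / 2) + 1) / (2 * \<Delta>\<^sup>2)"
proof -
  define c where "c = sqrt (ucb_f T / 2)"
  have c0: "c \<ge> 0" unfolding c_def using ucb_f_pos[of T] by simp
  define r where "r = (c + 1)\<^sup>2 / \<Delta>\<^sup>2"
  define \<alpha> where "\<alpha> = 2 * \<Delta>\<^sup>2 / (c + 1)"
  have a0: "\<alpha> > 0" using Dpos c0 by (simp add: \<alpha>_def)
  have r0: "r \<ge> 0" by (simp add: r_def)
  define p where "p n = M.prob (space Mr \<inter> Ba a m T n)" for n
  define A where "A = {1..T}"
  define B where "B = {n::nat. real n \<le> r}"
  define n0 where "n0 = nat \<lfloor>r\<rfloor> + 1"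
  define q where "q = exp (-\<alpha>)"
  have split: "sum p A = sum p (A \<inter> B) + sum p (A - B)"
    unfolding A_def by (rule sum.Int_Diff) simp
  have part1: "sum p (A \<inter> B) \<le> r"
  proof -
    have "sum p (A \<inter> B) \<le> sum (\<lambda>_. 1) (A \<inter> B)"
      by (intro sum_mono) (simp add: p_def)
    also have "\<dots> = real (card (A \<inter> B))" by simp
    also have "card (A \<inter> B) \<le> card {1..nat \<lfloor>r\<rfloor>}"
    proof (intro card_mono)
      show "A \<inter> B \<subseteq> {1..nat \<lfloor>r\<rfloor>}"
      proof
        fix n assume "n \<in> A \<inter> B"
        then have "1 \<le> n" "real n \<le> r" by (auto simp: A_def B_def)
        then show "n \<in> {1..nat \<lfloor>r\<rfloor>}" by (simp add: le_nat_floor)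
      qed
    qed simp
    then have "real (card (A \<inter> B)) \<le> real (nat \<lfloor>r\<rfloor>)" by simp
    also have "\<dots> \<le> r" using r0 by (simp add: of_nat_nat)
    finally show ?thesis by simp
  qed
  have pn: "p n \<le> q ^ (n - n0)" if n: "n \<in> A - B" for n
  proof -
    have n1: "1 \<le> n" "n \<le> T" "r < real n" using n by (auto simp: A_def B_def)
    have sqr: "sqrt r = (c + 1) / \<Delta>" unfolding r_def using Dpos c0 by (simp add: real_sqrt_divide)
    have "sqrt r < sqrt (real n)" using n1 by simp
    then have s1: "c + 1 < \<Delta> * sqrt n" using Dpos sqr by (simp add: field_simps)
    have "p n \<le> exp (-2 * (\<Delta> * sqrt n - c)\<^sup>2)"
      unfolding p_def c_def by (rule prob_Ba[OF a n1(1) D]) (use s1 in \<open>simp add: c_def\<close>)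
    also have "\<dots> \<le> exp (- (\<alpha> * (real n - r)))"
    proof -
      have "2 * ((\<Delta> * sqrt n)\<^sup>2 - (c + 1)\<^sup>2) / (c + 1) \<le> 2 * (\<Delta> * sqrt n - c)\<^sup>2"
        by (rule key_ineq) (use c0 s1 in auto)
      moreover have "\<alpha> * (real n - r) = 2 * (\<Delta>\<^sup>2 * real n - (c + 1)\<^sup>2) / (c + 1)"
      proof -
        have "\<Delta>\<^sup>2 > 0" "c + 1 > 0" using Dpos c0 by auto
        then show ?thesis unfolding \<alpha>_def r_def by (rule alg_aux)
      qed
      moreover have "(\<Delta> * sqrt n)\<^sup>2 = \<Delta>\<^sup>2 * real n" by (simp add: power_mult_distrib)
      ultimately show ?thesis by simp
    qed
    also have "\<dots> \<le> exp (- (\<alpha> * real (n - n0)))"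
    proof -
      have "r < real n" by (rule n1(3))
      then have "\<lfloor>r\<rfloor> < int n" by (simp add: floor_less_iff)
      then have nn0: "n0 \<le> n" unfolding n0_def using r0 by (simp add: nat_less_iff Suc_le_eq)
      have "r \<le> real n0" unfolding n0_def using r0 by (simp add: of_nat_nat) linarith
      then have "real (n - n0) \<le> real n - r" using nn0 by (simp add: of_nat_diff)
      then show ?thesis using a0 by simp
    qed
    also have "\<dots> = q ^ (n - n0)" unfolding q_def by (simp add: exp_of_nat_mult[symmetric] mult.commute)
    finally show ?thesis .
  qed
  have part2: "sum p (A - B) \<le> 1 + 1 / \<alpha>"
  proof -
    have "sum p (A - B) \<le> (\<Sum>n\<in>A - B. q ^ (n - n0))" by (intro sum_mono pn)
    also have "\<dots> = (\<Sum>j\<in>(\<lambda>n. n - n0) ` (A - B). q ^ j)"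
    proof (rule sum.reindex[symmetric, unfolded comp_def])
      show "inj_on (\<lambda>n. n - n0) (A - B)"
      proof (rule inj_onI)
        fix x y assume x: "x \<in> A - B" and y: "y \<in> A - B" and e: "x - n0 = y - n0"
        have "n0 \<le> x" "n0 \<le> y"
        proof -
          have "\<lfloor>r\<rfloor> < int x" "\<lfloor>r\<rfloor> < int y" using x y by (auto simp: B_def floor_less_iff)
          then show "n0 \<le> x" "n0 \<le> y" unfolding n0_def using r0 by (simp_all add: nat_less_iff Suc_le_eq)
        qed
        then show "x = y" using e by simp
      qed
    qed
    also have "\<dots> \<le> (\<Sum>j<T. q ^ j)"
    proof (rule sum_mono2)
      show "(\<lambda>n. n - n0) ` (A - B) \<subseteq> {..<T}"
        unfolding n0_def A_def by auto
    qed (auto simp: q_def)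
    also have "\<dots> \<le> 1 + 1 / \<alpha>" unfolding q_def by (rule geom_bound[OF a0])
    finally show ?thesis .
  qed
  have "(\<Sum>n\<in>{1..T}. M.prob (space Mr \<inter> Ba a m T n)) = sum p A" by (simp add: p_def A_def)
  also have "\<dots> \<le> r + (1 + 1 / \<alpha>)" using split part1 part2 by linarith
  also have "\<dots> = (c + 1)\<^sup>2 / \<Delta>\<^sup>2 + 1 + (c + 1) / (2 * \<Delta>\<^sup>2)"
    unfolding r_def \<alpha>_def using Dpos c0 by (simp add: field_simps)
  finally show ?thesis by (simp add: c_def)
qed

end



lemma final_arith:
  fixes T :: nat and \<Delta> :: real
  assumes T: "T \<ge> 3" and D: "\<Delta> > 0"
  shows "1 + (2 + 4 * exp 1 * ln (ln (real T)))
     + ((sqrt (ucb_f T / 2) + 1)\<^sup>2 / \<Delta>\<^sup>2 + 1 + (sqrt (ucb_f T / 2) + 1) / (2 * \<Delta>\<^sup>2))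
    \<le> ln (real T) / (2 * \<Delta>\<^sup>2)
       + 2 * sqrt pi / \<Delta>\<^sup>2 * sqrt (ln (real T) + 3 * ln (ln (real T)))
       + (4 * exp 1 + 3 / (2 * \<Delta>\<^sup>2)) * ln (ln (real T))
       + 8 / \<Delta>\<^sup>2 + 6"
proof -
  define LT where "LT = ln (real T)"
  define LL where "LL = ln (ln (real T))"
  define A where "A = 1 / \<Delta>\<^sup>2"
  have A: "A > 0" using D by (simp add: A_def)
  have f: "ucb_f T = LT + 3 * LL" unfolding LT_def LL_def by (rule ucb_f_eq[OF T])
  have fpos: "LT + 3 * LL > 0" using ucb_f_pos[of T] f by simp
  define c where "c = sqrt ((LT + 3 * LL) / 2)"
  define w where "w = sqrt (LT + 3 * LL)"
  have c0: "c \<ge> 0" and w0: "w \<ge> 0" using fpos by (auto simp: c_def w_def)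
  have c2: "c\<^sup>2 = (LT + 3 * LL) / 2" unfolding c_def using fpos by simp
  have w2: "w\<^sup>2 = LT + 3 * LL" unfolding w_def using fpos by simp
  have cw: "5 * c \<le> 4 * w"
  proof -
    have "(5 * c)\<^sup>2 \<le> (4 * w)\<^sup>2" using c2 w2 fpos by (simp add: power_mult_distrib)
    then show ?thesis using c0 w0 power2_le_imp_le[of "5 * c" "4 * w"] by simp
  qed
  have pi1: "1 \<le> sqrt pi" using pi_gt3 by simp
  have wpi: "w * A \<le> sqrt pi * w * A"
  proof -
    have "1 * (w * A) \<le> sqrt pi * (w * A)" using pi1 w0 A by (intro mult_right_mono) auto
    then show ?thesis by (simp add: mult.assoc)
  qed
  have cwA: "5 * (c * A) \<le> 4 * (w * A)" using cw A by (simp add: mult_right_mono)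
  have h1: "ln (real T) / (2 * \<Delta>\<^sup>2) = LT * A / 2" by (simp add: A_def LT_def)
  have h2: "2 * sqrt pi / \<Delta>\<^sup>2 * sqrt (ln (real T) + 3 * ln (ln (real T))) = 2 * (sqrt pi * w * A)"
    by (simp add: A_def w_def LT_def LL_def)
  have h3: "(4 * exp 1 + 3 / (2 * \<Delta>\<^sup>2)) * ln (ln (real T)) = 4 * exp 1 * LL + 3 * (LL * A) / 2"
    by (simp add: A_def LL_def algebra_simps)
  have h4: "8 / \<Delta>\<^sup>2 = 8 * A" by (simp add: A_def)
  have h5: "(sqrt (ucb_f T / 2) + 1)\<^sup>2 / \<Delta>\<^sup>2 = LT * A / 2 + 3 * (LL * A) / 2 + 2 * (c * A) + A"
  proof -
    have "sqrt (ucb_f T / 2) = c" by (simp add: c_def f)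
    then have "(sqrt (ucb_f T / 2) + 1)\<^sup>2 / \<Delta>\<^sup>2 = (c\<^sup>2 + 2 * c + 1) * A"
      by (simp add: A_def power2_eq_square algebra_simps add_divide_distrib)
    also have "\<dots> = LT * A / 2 + 3 * (LL * A) / 2 + 2 * (c * A) + A" by (simp add: c2 algebra_simps)
    finally show ?thesis .
  qed
  have h6: "(sqrt (ucb_f T / 2) + 1) / (2 * \<Delta>\<^sup>2) = (c * A) / 2 + A / 2"
    by (simp add: c_def f A_def add_divide_distrib)
  have "1 + (2 + 4 * exp 1 * LL) + (LT * A / 2 + 3 * (LL * A) / 2 + 2 * (c * A) + A + 1 + ((c * A) / 2 + A / 2))
     \<le> LT * A / 2 + 2 * (sqrt pi * w * A) + (4 * exp 1 * LL + 3 * (LL * A) / 2) + 8 * A + 6"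
    using wpi cwA A by linarith
  then show ?thesis unfolding h1 h2 h3 h4 h5 h6 by (simp add: LL_def)
qed



context bandit
begin

lemma sum_Estar:
  assumes s: "s < K" and m: "m = arm_mean \<nu> s" and K2: "K \<ge> 2" and T: "T \<ge> 3"
  shows "(\<Sum>t\<in>{K..<T}. M.prob (space Mr \<inter> Estar s m t)) \<le> 2 + 4 * exp 1 * ln (ln (real T))"
proof -
  define b where "b t = (if t \<le> 3 then 1 else 4 * exp 1 / (real t * ln (real t)))" for t :: nat
  have pb: "M.prob (space Mr \<inter> Estar s m t) \<le> b t" for t
  proof (cases "t \<le> 3")
    case True then show ?thesis by (simp add: b_def)
  next
    case False then show ?thesis unfolding b_def using prob_Estar[OF s m, of t] by simp
  qed
  have b0: "0 \<le> b t" for t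
  proof (cases "t \<le> 3")
    case False
    then have "ln (real t) > 0" by simp
    then show ?thesis using False by (simp add: b_def)
  qed (simp add: b_def)
  have "(\<Sum>t\<in>{K..<T}. M.prob (space Mr \<inter> Estar s m t)) \<le> (\<Sum>t\<in>{K..<T}. b t)"
    by (intro sum_mono pb)
  also have "\<dots> \<le> (\<Sum>t\<in>{2..<T}. b t)"
    by (rule sum_mono2) (use K2 b0 in auto)
  also have "\<dots> \<le> 2 + 4 * exp 1 * ln (ln (real T))"
  proof (cases "T \<ge> 4")
    case True
    have "(\<Sum>t\<in>{2..<T}. b t) = (\<Sum>t\<in>{2..<4}. b t) + (\<Sum>t\<in>{4..<T}. b t)"
      using True by (simp add: sum.atLeastLessThan_concat)
    also have "{2..<4::nat} = {2, 3}" by auto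
    also have "(\<Sum>t\<in>{2, 3}. b t) = 2" by (simp add: b_def)
    also have "(\<Sum>t\<in>{4..<T}. b t) = 4 * exp 1 * (\<Sum>t\<in>{4..<T}. 1 / (real t * ln (real t)))"
      unfolding sum_distrib_left by (intro sum.cong) (auto simp: b_def)
    also have "\<dots> \<le> 4 * exp 1 * ln (ln (real T))"
      using lnln_sum'[OF T] by (intro mult_left_mono) auto
    finally show ?thesis by simp
  next
    case False
    then have "T = 3" using T by simp
    moreover have "ln (ln (3::real)) > 0" using ln3_gt1 by simp
    ultimately show ?thesis by (simp add: b_def)
  qed
  finally show ?thesis .
qed

end

theorem corollary2:
  fixes K :: nat and \<nu> :: "nat \<Rightarrow> real measure" and \<pi> :: "history \<Rightarrow> nat"
    and a T :: nat
  assumes "K \<ge> 2"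
    and "\<And>b. b < K \<Longrightarrow> prob_space (\<nu> b)"
    and "\<And>b. b < K \<Longrightarrow> sets (\<nu> b) = sets borel"
    and "\<And>b. b < K \<Longrightarrow> AE x in \<nu> b. x \<in> {0..1}"
    and "is_ucb_policy K \<pi>"
    and "a < K"
    and "arm_mean \<nu> a < opt_mean K \<nu>"
    and "T \<ge> 3"
  shows "(\<integral>\<omega>. real (num_pulls (run \<pi> \<omega> T) a) \<partial>reward_space K \<nu>)
    \<le> ln (real T) / (2 * (opt_mean K \<nu> - arm_mean \<nu> a)\<^sup>2)
       + 2 * sqrt pi / (opt_mean K \<nu> - arm_mean \<nu> a)\<^sup>2
           * sqrt (ln (real T) + 3 * ln (ln (real T)))
       + (4 * exp 1 + 3 / (2 * (opt_mean K \<nu> - arm_mean \<nu> a)\<^sup>2)) * ln (ln (real T))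
       + 8 / (opt_mean K \<nu> - arm_mean \<nu> a)\<^sup>2 + 6"
proof -
  note K2 = assms(1) and ucb = assms(5) and a = assms(6) and gap = assms(7) and T = assms(8)
  interpret bandit K \<nu>
  proof (rule bandit.intro)
    show "1 \<le> K" using K2 by simp
    show "\<And>b. b < K \<Longrightarrow> prob_space (\<nu> b)" by (rule assms(2))
    show "\<And>b. b < K \<Longrightarrow> sets (\<nu> b) = sets borel" by (rule assms(3))
    show "\<And>b. b < K \<Longrightarrow> AE x in \<nu> b. x \<in> {0..1}" by (rule assms(4))
  qed
  obtain s where s: "s < K" "arm_mean \<nu> s = opt_mean K \<nu>"
  proof -
    have "opt_mean K \<nu> \<in> arm_mean \<nu> ` {0..<K}"
      unfolding opt_mean_def by (rule Max_in) (use K2 in auto)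
    then show ?thesis using that by auto
  qed
  define m where "m = opt_mean K \<nu>"
  define \<Delta> where "\<Delta> = m - arm_mean \<nu> a"
  have D: "\<Delta> > 0" using gap by (simp add: \<Delta>_def m_def)
  have ms: "m = arm_mean \<nu> s" using s by (simp add: m_def)
  define g :: "(nat \<times> nat \<Rightarrow> real) \<Rightarrow> real" where "g \<omega> = 1 + (\<Sum>t\<in>{K..<T}. indicator (Estar s m t) \<omega>) + (\<Sum>n\<in>{1..T}. indicator (Ba a m T n) \<omega>)" for \<omega>
  have Em: "Estar s m t \<inter> space Mr \<in> sets Mr" for t
  proof -
    note [measurable] = meas_comp[OF s(1)]
    have "Estar s m t \<inter> space Mr = {\<omega>\<in>space Mr. \<exists>n\<in>{1..t}. (\<Sum>i<n. \<omega> (s, i)) / real n + sqrt (ucb_f t / (2 * real n)) < m}"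
      by (auto simp: Estar_def)
    also have "\<dots> \<in> sets Mr" by measurable
    finally show ?thesis .
  qed
  have Bm: "Ba a m T n \<inter> space Mr \<in> sets Mr" for n
  proof -
    note [measurable] = meas_comp[OF a]
    have "Ba a m T n \<inter> space Mr = {\<omega>\<in>space Mr. m \<le> (\<Sum>i<n. \<omega> (a, i)) / real n + sqrt (ucb_f T / (2 * real n))}"
      by (auto simp: Ba_def)
    also have "\<dots> \<in> sets Mr" by measurable
    finally show ?thesis .
  qed
  have iE: "integrable Mr (indicator (Estar s m t) :: _ \<Rightarrow> real)" for t
    using Em[of t] M.emeasure_finite[of "Estar s m t \<inter> space Mr"] by (simp add: integrable_indicator_iff less_top[symmetric])
  have iB: "integrable Mr (indicator (Ba a m T n) :: _ \<Rightarrow> real)" for n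
    using Bm[of n] M.emeasure_finite[of "Ba a m T n \<inter> space Mr"] by (simp add: integrable_indicator_iff less_top[symmetric])
  have ig: "integrable Mr g" unfolding g_def using iE iB by auto
  have intg: "integral\<^sup>L Mr g = 1 + (\<Sum>t\<in>{K..<T}. M.prob (space Mr \<inter> Estar s m t)) + (\<Sum>n\<in>{1..T}. M.prob (space Mr \<inter> Ba a m T n))"
  proof -
    have "integral\<^sup>L Mr g = integral\<^sup>L Mr (\<lambda>_. 1) + integral\<^sup>L Mr (\<lambda>\<omega>. \<Sum>t\<in>{K..<T}. indicator (Estar s m t) \<omega>) + integral\<^sup>L Mr (\<lambda>\<omega>. \<Sum>n\<in>{1..T}. indicator (Ba a m T n) \<omega>)"
    proof -
      have i1: "integrable Mr (\<lambda>\<omega>. \<Sum>t\<in>{K..<T}. indicator (Estar s m t) \<omega> :: real)"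
        using Bochner_Integration.integrable_sum[of "{K..<T}" Mr "\<lambda>t \<omega>. indicator (Estar s m t) \<omega> :: real"] iE by simp
      have i2: "integrable Mr (\<lambda>\<omega>. \<Sum>n\<in>{1..T}. indicator (Ba a m T n) \<omega> :: real)"
        using Bochner_Integration.integrable_sum[of "{1..T}" Mr "\<lambda>n \<omega>. indicator (Ba a m T n) \<omega> :: real"] iB by simp
      have "integral\<^sup>L Mr g = integral\<^sup>L Mr (\<lambda>\<omega>. 1 + (\<Sum>t\<in>{K..<T}. indicator (Estar s m t) \<omega>)) + integral\<^sup>L Mr (\<lambda>\<omega>. \<Sum>n\<in>{1..T}. indicator (Ba a m T n) \<omega>)"
        unfolding g_def by (rule Bochner_Integration.integral_add) (use i1 i2 in auto)
      also have "integral\<^sup>L Mr (\<lambda>\<omega>. 1 + (\<Sum>t\<in>{K..<T}. indicator (Estar s m t) \<omega>) :: real) = integral\<^sup>L Mr (\<lambda>_. 1::real) + integral\<^sup>L Mr (\<lambda>\<omega>. \<Sum>t\<in>{K..<T}. indicator (Estar s m t) \<omega> :: real)"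
        by (rule Bochner_Integration.integral_add) (use i1 in auto)
      finally show ?thesis .
    qed
    also have "\<dots> = 1 + (\<Sum>t\<in>{K..<T}. M.prob (space Mr \<inter> Estar s m t)) + (\<Sum>n\<in>{1..T}. M.prob (space Mr \<inter> Ba a m T n))"
      using iE iB by (simp add: integral_sum Int_commute M.prob_space)
    finally show ?thesis .
  qed
  have pw: "real (num_pulls (run \<pi> \<omega> T) a) \<le> g \<omega>" for \<omega>
    unfolding g_def by (rule pointwise[OF ucb s(1) a])
  have g0: "0 \<le> g \<omega>" for \<omega> unfolding g_def by (simp add: sum_nonneg)
  have "(\<integral>\<omega>. real (num_pulls (run \<pi> \<omega> T) a) \<partial>Mr) \<le> integral\<^sup>L Mr g"
  proof (cases "integrable Mr (\<lambda>\<omega>. real (num_pulls (run \<pi> \<omega> T) a))")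
    case True
    then show ?thesis by (rule integral_mono[OF _ ig]) (use pw in auto)
  next
    case False
    then have "(\<integral>\<omega>. real (num_pulls (run \<pi> \<omega> T) a) \<partial>Mr) = 0" by (rule not_integrable_integral_eq)
    moreover have "0 \<le> integral\<^sup>L Mr g" using g0 by (simp add: Bochner_Integration.integral_nonneg)
    ultimately show ?thesis by simp
  qed
  also have "\<dots> \<le> 1 + (2 + 4 * exp 1 * ln (ln (real T)))
     + ((sqrt (ucb_f T / 2) + 1)\<^sup>2 / \<Delta>\<^sup>2 + 1 + (sqrt (ucb_f T / 2) + 1) / (2 * \<Delta>\<^sup>2))"
    unfolding intg
    using sum_Estar[OF s(1) ms K2 T] sum_Ba[OF a \<Delta>_def D, of T] by linarith
  also have "\<dots> \<le> ln (real T) / (2 * \<Delta>\<^sup>2)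
       + 2 * sqrt pi / \<Delta>\<^sup>2 * sqrt (ln (real T) + 3 * ln (ln (real T)))
       + (4 * exp 1 + 3 / (2 * \<Delta>\<^sup>2)) * ln (ln (real T))
       + 8 / \<Delta>\<^sup>2 + 6"
    by (rule final_arith[OF T D])
  finally show ?thesis by (simp add: \<Delta>_def m_def)
qed


end
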